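(* Let $p$ be a prime and let $m$ be an integer. Let $G$ be a vector space over the field $\mathbb{F}_p$ of dimension $d \geq 3$, and let $S$ be a subset of $G$ such that $|S \cap H| \geq mp^{d-2}$ for each vector hyperplane $H$ (that is, each linear subspace of dimension $d - 1$) of $G$. Then $|S| \geq mp^{d-1}$. *)

theory Defs
  imports "HOL-Analysis.Analysis"
begin

end

theory Submission
  imports Defs
begin


definition Zf :: "'b set \<Rightarrow> ('b \<Rightarrow> 'a::zero) set" where
  "Zf A = {f. \<forall>x. x \<notin> A \<longrightarrow> f x = 0}"

lemma Zf_image: "Zf A = (\<lambda>g x. if x \<in> A then g x else 0) ` (PiE A (\<lambda>_. UNIV))"
proof
  show "Zf A \<subseteq> (\<lambda>g x. if x \<in> A then g x else 0) ` (PiE A (\<lambda>_. UNIV))"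
  proof
    fix f assume "f \<in> Zf A"
    then have "f = (\<lambda>x. if x \<in> A then restrict f A x else 0)" by (auto simp: Zf_def)
    then show "f \<in> (\<lambda>g x. if x \<in> A then g x else 0) ` (PiE A (\<lambda>_. UNIV))"
      by (intro image_eqI[of _ _ "restrict f A"]) auto
  qed
qed (auto simp: Zf_def)

lemma card_Zf:
  assumes "finite A" shows "card (Zf A :: ('b \<Rightarrow> 'a::{zero,finite}) set) = CARD('a) ^ card A"
proof -
  have "inj_on (\<lambda>g x. if x \<in> A then (g x::'a) else 0) (PiE A (\<lambda>_. UNIV))"
    by (auto simp: inj_on_def PiE_def extensional_def fun_eq_iff) (metis)
  then have "card (Zf A :: ('b \<Rightarrow> 'a) set) = card (PiE A (\<lambda>_. UNIV::'a set))"
    by (simp add: Zf_image card_image)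
  also have "\<dots> = CARD('a) ^ card A" using assms by (simp add: card_PiE)
  finally show ?thesis .
qed

lemma finite_Zf: "finite A \<Longrightarrow> finite (Zf A :: ('b \<Rightarrow> 'a::{zero,finite}) set)"
  unfolding Zf_image by (intro finite_imageI finite_PiE) auto

lemma card_Zf_hyp:
  fixes r :: "'b \<Rightarrow> 'a::{field,finite}"
  assumes "finite A" "b0 \<in> A" "r b0 \<noteq> 0"
  shows "card {c \<in> Zf A. (\<Sum>b\<in>A. c b * r b) = 0} = CARD('a) ^ (card A - 1)"
proof -
  define t where "t g = - (\<Sum>b\<in>A-{b0}. g b * r b) / r b0" for g :: "'b \<Rightarrow> 'a"
  have sumA: "(\<Sum>b\<in>A. c b * r b) = c b0 * r b0 + (\<Sum>b\<in>A-{b0}. c b * r b)" for c :: "'b \<Rightarrow> 'a"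
    using assms by (simp add: sum.remove)
  have eq: "{c \<in> Zf A. (\<Sum>b\<in>A. c b * r b) = 0} = (\<lambda>g. g(b0 := t g)) ` Zf (A - {b0})"
  proof
    show "{c \<in> Zf A. (\<Sum>b\<in>A. c b * r b) = 0} \<subseteq> (\<lambda>g. g(b0 := t g)) ` Zf (A - {b0})"
    proof
      fix c assume c: "c \<in> {c \<in> Zf A. (\<Sum>b\<in>A. c b * r b) = 0}"
      have s2: "(\<Sum>b\<in>A-{b0}. (c(b0:=0)) b * r b) = (\<Sum>b\<in>A-{b0}. c b * r b)"
        by (intro sum.cong) auto
      have "c b0 = t (c(b0:=0))"
        using c sumA[of c] assms(3) unfolding t_def s2 by (auto simp: field_simps add_eq_0_iff)
      then have "c = (c(b0:=0))(b0 := t (c(b0:=0)))" by auto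
      moreover have "c(b0:=0) \<in> Zf (A - {b0})" using c by (auto simp: Zf_def)
      ultimately show "c \<in> (\<lambda>g. g(b0 := t g)) ` Zf (A - {b0})" by blast
    qed
  next
    show "(\<lambda>g. g(b0 := t g)) ` Zf (A - {b0}) \<subseteq> {c \<in> Zf A. (\<Sum>b\<in>A. c b * r b) = 0}"
    proof
      fix c assume "c \<in> (\<lambda>g. g(b0 := t g)) ` Zf (A - {b0})"
      then obtain g where g: "g \<in> Zf (A - {b0})" "c = g(b0 := t g)" by auto
      have s2: "(\<Sum>b\<in>A-{b0}. c b * r b) = (\<Sum>b\<in>A-{b0}. g b * r b)"
        using g by (intro sum.cong) auto
      have "c b0 * r b0 = - (\<Sum>b\<in>A-{b0}. g b * r b)" using g assms(3) by (simp add: t_def)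
      then have "(\<Sum>b\<in>A. c b * r b) = 0" using sumA[of c] s2 by simp
      moreover have "c \<in> Zf A" using g assms(2) by (auto simp: Zf_def)
      ultimately show "c \<in> {c \<in> Zf A. (\<Sum>b\<in>A. c b * r b) = 0}" by blast
    qed
  qed
  have inj: "inj_on (\<lambda>g. g(b0 := t g)) (Zf (A - {b0}))"
  proof (rule inj_onI)
    fix g h assume g: "g \<in> Zf (A - {b0})" and h: "h \<in> Zf (A - {b0})" and e: "g(b0 := t g) = h(b0 := t h)"
    show "g = h"
    proof
      fix x show "g x = h x"
        using g h fun_cong[OF e, of x] by (cases "x = b0") (auto simp: Zf_def)
    qed
  qed
  show ?thesis using assms unfolding eq
    by (simp add: card_image[OF inj] card_Zf card_Diff_singleton)
qed

lemma card_lin2: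
  fixes u v :: "'a::{field,finite}"
  assumes "u \<noteq> 0 \<or> v \<noteq> 0"
  shows "card {q :: 'a \<times> 'a. fst q * u + snd q * v = 0} = CARD('a)"
proof (cases "u = 0")
  case True
  then have "v \<noteq> 0" using assms by auto
  then have "{q :: 'a \<times> 'a. fst q * u + snd q * v = 0} = (\<lambda>a. (a, 0)) ` UNIV"
    using True by (auto simp: image_iff)
  then show ?thesis by (simp add: card_image inj_on_def)
next
  case False
  have "{q :: 'a \<times> 'a. fst q * u + snd q * v = 0} = (\<lambda>b. (- b * v / u, b)) ` UNIV"
  proof safe
    fix a b assume "fst (a, b) * u + snd (a, b) * v = 0"
    then have "a = - b * v / u" using False by (simp add: field_simps add_eq_0_iff)
    then show "(a, b) \<in> range (\<lambda>b. (- b * v / u, b))" by auto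
  qed (use False in \<open>auto simp: field_simps\<close>)
  then show ?thesis by (simp add: card_image inj_on_def)
qed

lemma sum_card_swap:
  assumes "finite A" "finite S"
  shows "(\<Sum>a\<in>A. card {x\<in>S. P a x}) = (\<Sum>x\<in>S. card {a\<in>A. P a x})"
proof -
  have c: "card {x\<in>T. Q x} = (\<Sum>x\<in>T. if Q x then 1 else 0)" if "finite T" for T :: "'z set" and Q
    using that by (simp add: sum.If_cases Int_def conj_commute)
  show ?thesis using assms by (simp add: c sum.swap[of _ A S])
qed



lemma arith1:
  fixes p N a b :: nat
  assumes "p \<ge> 2" "(p*p-1)*N \<le> (p*p-1)*a + (p-1)*b"
  shows "N*(p+1) \<le> a + b + p*a"
proof -
  have e: "p*p-1 = (p-1)*(p+1)" by (simp add: algebra_simps)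
  have "(p-1)*(N*(p+1)) = ((p-1)*(p+1))*N" by (metis mult.commute mult.assoc)
  then have "(p-1)*(N*(p+1)) = (p*p-1)*N" unfolding e .
  moreover have "\<And>q::nat. q*(a + b + p*a) = (q*(p+1))*a + q*b" by (simp add: algebra_simps)
  then have "(p-1)*(a + b + p*a) = (p*p-1)*a + (p-1)*b" unfolding e by blast
  ultimately have "(p-1)*(N*(p+1)) \<le> (p-1)*(a + b + p*a)"
    using assms(2) by simp
  then show ?thesis using assms(1) by simp
qed

lemma arith2:
  fixes p d :: nat
  assumes "p \<ge> 2" "d \<ge> 3"
  shows "(p^(d-1)-1)*(p^(d-1)-p)*(p*p) \<le> (p^d-1)*(p^d-p)"
    and "0 < (p^(d-1)-1)*(p^(d-1)-p)"
proof -
  obtain k where d: "d = k + 3" using assms(2) by (metis add.commute le_Suc_ex)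
  have p1: "p^(k+2) \<ge> p*p" using assms(1) by (metis add_2_eq_Suc' le_add2 one_le_numeral power2_eq_square power_increasing le_trans order.trans self_le_power zero_less_numeral)
  have "p*p \<ge> 2*p" using assms(1) by simp
  then have p2: "p^(k+2) > p" using p1 assms(1) by linarith
  have pk: "p^(k+3) = p^(k+2)*p" by (simp add: eval_nat_numeral)
  have e1: "(p^(k+2)-1)*p = p^(k+3)-p" unfolding pk by (simp add: diff_mult_distrib)
  have e2: "(p^(k+2)-p)*p = p^(k+3)-p*p" unfolding pk by (simp add: diff_mult_distrib)
  have "(p^(k+2)-1)*(p^(k+2)-p)*(p*p) = ((p^(k+2)-1)*p)*((p^(k+2)-p)*p)" by (simp add: algebra_simps)
  also have "\<dots> = (p^(k+3)-p)*(p^(k+3)-p*p)" using e1 e2 by simp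
  also have "\<dots> \<le> (p^(k+3)-1)*(p^(k+3)-p)"
  proof -
    have "p^(k+3)-p*p \<le> p^(k+3)-1" using assms(1) by (simp add: diff_le_mono2)
    then show ?thesis by (simp add: mult.commute mult_le_mono)
  qed
  finally show "(p^(d-1)-1)*(p^(d-1)-p)*(p*p) \<le> (p^d-1)*(p^d-p)" by (simp add: d)
  have "d - 1 = k + 2" using d by simp
  then have q: "p^(d-1) = p^(k+2)" by simp
  have "p^(d-1) > p" by (simp only: q) (rule p2)
  then have "p^(d-1) - 1 > 0" "p^(d-1) - p > 0" using assms(1) by linarith+
  then show "0 < (p^(d-1)-1)*(p^(d-1)-p)" by simp
qed

lemma arith3:
  fixes P A K z t p :: nat
  assumes "P*(K+1) \<le> P*z + A*t" "z \<le> 1" "A*(p*p) \<le> P" "0 < A" "t < K*(p*p)"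
  shows False
proof -
  have "P*z \<le> P" using assms(2) by (metis mult.right_neutral mult_le_mono2)
  moreover have "P*(K+1) = P*K + P" by simp
  ultimately have "P*K \<le> A*t" using assms(1) by linarith
  also have "A*t < A*(K*(p*p))" using assms(4,5) by simp
  also have "\<dots> = (A*(p*p))*K" by (simp add: algebra_simps)
  also have "\<dots> \<le> P*K" using assms(3) by simp
  finally show False by simp
qed



lemma sum_if_card:
  fixes a b :: nat
  assumes "finite S"
  shows "(\<Sum>x\<in>S. if x \<in> W then a else b) = a * card (S \<inter> W) + b * card (S - W)"
  using assms by (simp add: sum.If_cases Diff_eq Int_def)

lemma card_split: "finite S \<Longrightarrow> card S = card (S \<inter> W) + card (S - W)"
proof -
  assume f: "finite S"
  have "S = (S \<inter> W) \<union> (S - W)" by blast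
  then have "card S = card ((S \<inter> W) \<union> (S - W))" by simp
  also have "\<dots> = card (S \<inter> W) + card (S - W)" using f by (intro card_Un_disjoint) auto
  finally show ?thesis .
qed

lemma main_nat:
  fixes scale :: "'k::{field,finite} \<Rightarrow> 'v::ab_group_add \<Rightarrow> 'v" and S :: "'v set" and n d :: nat
  assumes vs: "vector_space scale" and dimd: "vector_space.dim scale (UNIV::'v set) = d"
    and d3: "d \<ge> 3"
    and hyp: "\<And>H. module.subspace scale H \<Longrightarrow> vector_space.dim scale H = d - 1 \<Longrightarrow>
                 n * CARD('k)^(d-2) \<le> card (S \<inter> H)"
  shows "n * CARD('k)^(d-1) \<le> card S"
proof -
  interpret vector_space scale by fact
  obtain B where B: "independent B" "UNIV \<subseteq> span B" "card B = d"
    using basis_exists[of UNIV] dimd by blast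
  have finB: "finite B" using B(3) d3 by (metis card.infinite not_numeral_le_zero)
  have spanB: "span B = UNIV" using B(2) by auto
  interpret fd: finite_dimensional_vector_space scale B
    by unfold_locales (use finB B spanB in auto)
  define p where "p = CARD('k)"
  have p2: "p \<ge> 2"
  proof -
    have "card {0::'k, 1} = 2" by simp
    moreover have "card {0::'k, 1} \<le> CARD('k)" by (rule card_mono) auto
    ultimately show ?thesis unfolding p_def by simp
  qed
  define R where "R x = representation B x" for x
  define \<phi> where "\<phi> c x = (\<Sum>b\<in>B. c b * R x b)" for c :: "'v \<Rightarrow> 'k" and x
  define H where "H c = {x. \<phi> c x = 0}" for c
  define zf where "zf = (\<lambda>_::'v. 0::'k)"
  define L where "L c = range (\<lambda>l::'k. \<lambda>b. l * c b)" for c :: "'v \<Rightarrow> 'k"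
  have R_add: "R (x + y) b = R x b + R y b" for x y b
    using representation_add[OF B(1), of y x] spanB by (simp add: R_def)
  have R_diff: "R (x - y) b = R x b - R y b" for x y b
    using representation_diff[OF B(1), of y x] spanB by (simp add: R_def)
  have R_scale: "R (scale a x) b = a * R x b" for a x b
    using representation_scale[OF B(1), of x a] spanB by (simp add: R_def)
  have R_zero: "R 0 b = 0" for b by (simp add: R_def representation_zero)
  have R_Z: "R x \<in> Zf B" for x
    using representation_ne_zero[of B x] by (auto simp: Zf_def R_def)
  have R_sum: "(\<Sum>b\<in>B. scale (R x b) b) = x" for x
    using sum_representation_eq[OF B(1) _ finB] spanB by (simp add: R_def)
  have R_nz: "\<exists>b0\<in>B. R x b0 \<noteq> 0" if "x \<noteq> 0" for x
  proof (rule ccontr)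
    assume "\<not> ?thesis"
    then have "(\<Sum>b\<in>B. scale (R x b) b) = 0" by simp
    then show False using R_sum[of x] that by simp
  qed
  have R_basis: "R b0 b = (if b = b0 then 1 else 0)" if "b0 \<in> B" for b0 b
    using representation_basis[OF B(1) that] by (simp add: R_def)
  have finV: "finite (UNIV :: 'v set)"
  proof -
    have "x \<in> (\<lambda>f. \<Sum>b\<in>B. scale (f b) b) ` Zf B" for x
      by (rule image_eqI[of _ _ "R x"]) (simp_all add: R_sum R_Z)
    then have "UNIV \<subseteq> (\<lambda>f. \<Sum>b\<in>B. scale (f b) b) ` Zf B" by blast
    moreover have "finite ((\<lambda>f. \<Sum>b\<in>B. scale (f b) b) ` Zf B)"
      using finite_Zf[OF finB] by (rule finite_imageI)
    ultimately show ?thesis by (rule finite_subset)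
  qed
  have finS: "finite S" using finV by (rule finite_subset[rotated]) auto
  have phi_add: "\<phi> c (x + y) = \<phi> c x + \<phi> c y" for c x y
    by (simp add: \<phi>_def R_add algebra_simps sum.distrib)
  have phi_diff: "\<phi> c (x - y) = \<phi> c x - \<phi> c y" for c x y
    by (simp add: \<phi>_def R_diff algebra_simps sum_subtractf)
  have phi_scale: "\<phi> c (scale a x) = a * \<phi> c x" for c a x
    by (simp add: \<phi>_def R_scale algebra_simps sum_distrib_left)
  have phi_zero: "\<phi> c 0 = 0" for c by (simp add: \<phi>_def R_zero)
  have phi_comb: "\<phi> (\<lambda>b. \<alpha> * c b + \<beta> * e b) x = \<alpha> * \<phi> c x + \<beta> * \<phi> e x" for \<alpha> \<beta> c e x
    by (simp add: \<phi>_def algebra_simps sum.distrib sum_distrib_left)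
  have phi_sc: "\<phi> (\<lambda>b. l * c b) x = l * \<phi> c x" for l c x
    by (simp add: \<phi>_def algebra_simps sum_distrib_left)
  have zf_Z: "zf \<in> Zf B" by (simp add: zf_def Zf_def)
  have card_ZB: "card (Zf B :: ('v \<Rightarrow> 'k) set) = p ^ d"
    using card_Zf[OF finB] B(3) by (simp add: p_def)
  have finZ: "finite (Zf B :: ('v \<Rightarrow> 'k) set)" using finite_Zf[OF finB] .

  have hyper: "n * p^(d-2) \<le> card (S \<inter> H c)" if c: "c \<in> Zf B" "c \<noteq> zf" for c
  proof -
    obtain b0 where b0: "c b0 \<noteq> 0" using c(2) by (auto simp: zf_def)
    then have b0B: "b0 \<in> B" using c(1) by (auto simp: Zf_def)
    have phib0: "\<phi> c b0 = c b0"
      using b0B finB by (simp add: \<phi>_def R_basis[OF b0B] if_distrib cong: if_cong)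
    have sub: "subspace (H c)"
      unfolding subspace_def H_def by (simp add: phi_zero phi_add phi_scale)
    have spH: "span (H c) = H c" using span_eq_iff[of "H c"] sub by simp
    have "b0 \<notin> H c" using phib0 b0 by (simp add: H_def)
    then have nin: "b0 \<notin> span (H c)" unfolding spH .
    have "span (insert b0 (H c)) = UNIV"
    proof (rule set_eqI, rule iffI)
      fix x :: 'v
      define t where "t = \<phi> c x / \<phi> c b0"
      have "x - scale t b0 \<in> H c"
        using b0 phib0 by (simp add: H_def phi_diff phi_scale t_def)
      then have "x - scale t b0 \<in> span (insert b0 (H c))" by (simp add: span_base)
      moreover have "scale t b0 \<in> span (insert b0 (H c))" by (simp add: span_base span_scale)
      ultimately have "(x - scale t b0) + scale t b0 \<in> span (insert b0 (H c))" by (rule span_add)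
      then show "x \<in> span (insert b0 (H c))" by simp
    qed auto
    then have "dim (UNIV :: 'v set) = dim (insert b0 (H c))" by (metis dim_span)
    also have "\<dots> = dim (H c) + 1" using fd.dim_insert nin by simp
    finally have "dim (H c) = d - 1" using dimd by simp
    then show ?thesis using hyp[OF sub] by (simp add: p_def)
  qed

  have pencil: "n * p^(d-2) * (p+1) \<le> card S + p * card (S \<inter> H c \<inter> H e)"
    if c: "c \<in> Zf B" "c \<noteq> zf" and e: "e \<in> Zf B" "e \<notin> L c" for c e
  proof -
    define Q where "Q = (UNIV - {(0,0)} :: ('k \<times> 'k) set)"
    define g where "g q = (\<lambda>b. fst q * c b + snd q * e b)" for q :: "'k \<times> 'k"
    have gZ: "g q \<in> Zf B" for q using c(1) e(1) by (auto simp: g_def Zf_def)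
    have gnz: "g q \<noteq> zf" if "q \<in> Q" for q
    proof
      assume g0: "g q = zf"
      show False
      proof (cases "snd q = 0")
        case True
        then have "fst q \<noteq> 0" using that by (auto simp: Q_def prod_eq_iff)
        then have "c = zf" using g0 True by (auto simp: g_def zf_def fun_eq_iff)
        then show False using c(2) by simp
      next
        case False
        have "e = (\<lambda>b. (- fst q / snd q) * c b)"
        proof
          fix b
          have "fst q * c b + snd q * e b = 0" using fun_cong[OF g0, of b] by (simp add: g_def zf_def)
          then show "e b = (- fst q / snd q) * c b" using False by (simp add: field_simps add_eq_0_iff)
        qed
        then have "e \<in> L c" unfolding L_def by (rule range_eqI)
        then show False using e(2) by simp
      qed
    qed
    have finQ: "finite Q" by simp
    have "card (UNIV :: ('k \<times> 'k) set) = p * p"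
      unfolding UNIV_Times_UNIV[symmetric] by (simp add: card_cartesian_product p_def)
    then have cardQ: "card Q = p*p - 1" by (simp add: Q_def card_Diff_singleton)
    have gphi: "\<phi> (g q) x = fst q * \<phi> c x + snd q * \<phi> e x" for q x
      unfolding g_def by (rule phi_comb)
    have low: "card Q * (n * p^(d-2)) \<le> (\<Sum>q\<in>Q. card {x\<in>S. \<phi> (g q) x = 0})"
    proof -
      have "of_nat (card Q) * (n * p^(d-2)) \<le> (\<Sum>q\<in>Q. card {x\<in>S. \<phi> (g q) x = 0})"
      proof (rule sum_bounded_below)
        fix q assume "q \<in> Q"
        have "S \<inter> H (g q) = {x\<in>S. \<phi> (g q) x = 0}" by (auto simp: H_def)
        then show "n * p^(d-2) \<le> card {x\<in>S. \<phi> (g q) x = 0}"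
          using hyper[OF gZ gnz[OF \<open>q \<in> Q\<close>]] by simp
      qed
      then show ?thesis by simp
    qed
    have per: "card {q\<in>Q. \<phi> (g q) x = 0} = (if x \<in> H c \<inter> H e then p*p-1 else p-1)" for x
    proof (cases "x \<in> H c \<inter> H e")
      case True
      then have "{q\<in>Q. \<phi> (g q) x = 0} = Q" by (auto simp: gphi H_def)
      then show ?thesis using True cardQ by simp
    next
      case False
      then have ne: "\<phi> c x \<noteq> 0 \<or> \<phi> e x \<noteq> 0" by (auto simp: H_def)
      have "{q\<in>Q. \<phi> (g q) x = 0} = {q. fst q * \<phi> c x + snd q * \<phi> e x = 0} - {(0,0)}"
        by (auto simp: gphi Q_def)
      moreover have "(0,0) \<in> {q :: 'k \<times> 'k. fst q * \<phi> c x + snd q * \<phi> e x = 0}" by simp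
      ultimately have "card {q\<in>Q. \<phi> (g q) x = 0} = CARD('k) - 1"
        using card_lin2[OF ne] by (simp add: card_Diff_singleton)
      then show ?thesis by (subst if_not_P[OF False]) (simp add: p_def)
    qed
    have "(\<Sum>q\<in>Q. card {x\<in>S. \<phi> (g q) x = 0}) = (\<Sum>x\<in>S. card {q\<in>Q. \<phi> (g q) x = 0})"
      by (rule sum_card_swap[OF finQ finS])
    also have "\<dots> = (\<Sum>x\<in>S. if x \<in> H c \<inter> H e then p*p-1 else p-1)" by (simp add: per)
    also have "\<dots> = (p*p-1) * card (S \<inter> (H c \<inter> H e)) + (p-1) * card (S - (H c \<inter> H e))"
      by (rule sum_if_card[OF finS])
    finally have "(p*p-1) * (n * p^(d-2)) \<le> (p*p-1) * card (S \<inter> (H c \<inter> H e)) + (p-1) * card (S - (H c \<inter> H e))"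
      using low cardQ by simp
    from arith1[OF p2 this] card_split[OF finS, of "H c \<inter> H e"]
    show ?thesis by (simp add: Int_assoc)
  qed
  show ?thesis
  proof (rule ccontr)
    assume neg: "\<not> n * CARD('k)^(d-1) \<le> card S"
    then have sless: "card S < n * p^(d-1)" by (simp add: p_def)
    define K where "K = n * p^(d-3)"
    obtain k where dk: "d = k + 3" using d3 by (metis add.commute le_Suc_ex)
    have pK: "K*(p*p) = n*p^(d-1)" "p*K = n*p^(d-2)" "n*p^(d-2)*p = n*p^(d-1)"
      by (simp_all add: K_def dk eval_nat_numeral algebra_simps)
    have big: "K + 1 \<le> card (S \<inter> H c \<inter> H e)"
      if "c \<in> Zf B" "c \<noteq> zf" "e \<in> Zf B" "e \<notin> L c" for c e
    proof (rule ccontr)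
      assume "\<not> ?thesis"
      then have w: "card (S \<inter> H c \<inter> H e) \<le> K" by simp
      have "n*p^(d-2)*(p+1) \<le> card S + p*K"
        using pencil[OF that] w by (meson add_left_mono mult_le_mono2 order_trans)
      moreover have "n*p^(d-2)*(p+1) = n*p^(d-2)*p + n*p^(d-2)" by (simp add: algebra_simps)
      ultimately have "n*p^(d-1) \<le> card S" using pK(2,3) by linarith
      then show False using sless by simp
    qed
    define PP where "PP = Sigma (Zf B - {zf}) (\<lambda>c. Zf B - L c)"
    have LZ: "L c \<subseteq> Zf B" if "c \<in> Zf B" for c using that by (auto simp: L_def Zf_def)
    have cardL: "card (L c) = p" if cz: "c \<noteq> zf" for c
    proof -
      obtain b0 where b0: "c b0 \<noteq> 0" using cz by (auto simp: zf_def)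
      have "inj (\<lambda>l::'k. \<lambda>b. l * c b)"
      proof (rule injI)
        fix l l' :: 'k assume "(\<lambda>b. l * c b) = (\<lambda>b. l' * c b)"
        then have "l * c b0 = l' * c b0" by (metis)
        then show "l = l'" using b0 by simp
      qed
      then show ?thesis by (simp add: L_def card_image p_def)
    qed
    have zfin: "zf \<in> Zf B" by (rule zf_Z)
    have cardZ0: "card (Zf B - {zf}) = p^d - 1" using zfin card_ZB finZ by (simp add: card_Diff_singleton)
    have finPP: "finite PP" using finZ by (simp add: PP_def)
    have cardPP: "card PP = (p^d - 1)*(p^d - p)"
    proof -
      have "card PP = (\<Sum>c\<in>Zf B - {zf}. card (Zf B - L c))"
        using finZ by (simp add: PP_def)
      also have "\<dots> = (\<Sum>c\<in>Zf B - {zf}. p^d - p)"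
      proof (rule sum.cong[OF refl])
        fix c assume "c \<in> Zf B - {zf}"
        then show "card (Zf B - L c) = p^d - p"
          using LZ[of c] cardL[of c] card_ZB finZ by (simp add: card_Diff_subset finite_subset)
      qed
      finally show ?thesis using cardZ0 by simp
    qed
    define A where "A = (p^(d-1)-1)*(p^(d-1)-p)"
    have low2: "card PP * (K+1) \<le> (\<Sum>q\<in>PP. card {x\<in>S. \<phi> (fst q) x = 0 \<and> \<phi> (snd q) x = 0})"
    proof -
      have "of_nat (card PP) * (K+1) \<le> (\<Sum>q\<in>PP. card {x\<in>S. \<phi> (fst q) x = 0 \<and> \<phi> (snd q) x = 0})"
      proof (rule sum_bounded_below)
        fix q assume q: "q \<in> PP"
        have "S \<inter> H (fst q) \<inter> H (snd q) = {x\<in>S. \<phi> (fst q) x = 0 \<and> \<phi> (snd q) x = 0}"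
          by (auto simp: H_def)
        moreover have "K + 1 \<le> card (S \<inter> H (fst q) \<inter> H (snd q))"
          using q by (intro big) (auto simp: PP_def)
        ultimately show "K + 1 \<le> card {x\<in>S. \<phi> (fst q) x = 0 \<and> \<phi> (snd q) x = 0}" by simp
      qed
      then show ?thesis by simp
    qed
    have per2: "card {q\<in>PP. \<phi> (fst q) x = 0 \<and> \<phi> (snd q) x = 0} = (if x \<in> {0} then card PP else A)" for x
    proof (cases "x = 0")
      case True
      then show ?thesis by (simp add: phi_zero)
    next
      case False
      obtain b0 where b0: "b0 \<in> B" "R x b0 \<noteq> 0" using R_nz[OF False] by blast
      have hx: "card {e \<in> Zf B. \<phi> e x = 0} = p^(d-1)"
        using card_Zf_hyp[where r="R x", OF finB b0] B(3) by (simp add: \<phi>_def p_def)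
      have zx: "zf \<in> {e \<in> Zf B. \<phi> e x = 0}" using zfin by (simp add: zf_def \<phi>_def)
      have finx: "finite {e \<in> Zf B. \<phi> e x = 0}" using finZ by simp
      have eq: "{q\<in>PP. \<phi> (fst q) x = 0 \<and> \<phi> (snd q) x = 0}
          = Sigma ({c\<in>Zf B. \<phi> c x = 0} - {zf}) (\<lambda>c. {e\<in>Zf B. \<phi> e x = 0} - L c)"
        by (auto simp: PP_def)
      have "card {q\<in>PP. \<phi> (fst q) x = 0 \<and> \<phi> (snd q) x = 0}
          = (\<Sum>c\<in>{c\<in>Zf B. \<phi> c x = 0} - {zf}. card ({e\<in>Zf B. \<phi> e x = 0} - L c))"
        unfolding eq using finx by simp
      also have "\<dots> = (\<Sum>c\<in>{c\<in>Zf B. \<phi> c x = 0} - {zf}. p^(d-1) - p)"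
      proof (rule sum.cong[OF refl])
        fix c assume c: "c \<in> {c\<in>Zf B. \<phi> c x = 0} - {zf}"
        have "L c \<subseteq> {e\<in>Zf B. \<phi> e x = 0}"
          using c LZ[of c] by (auto simp: L_def phi_sc)
        then show "card ({e\<in>Zf B. \<phi> e x = 0} - L c) = p^(d-1) - p"
          using cardL[of c] c hx finx by (simp add: card_Diff_subset finite_subset)
      qed
      also have "\<dots> = (p^(d-1) - 1) * (p^(d-1) - p)"
        using hx zx finx by (simp add: card_Diff_singleton)
      finally show ?thesis using False by (simp add: A_def)
    qed
    have "(\<Sum>q\<in>PP. card {x\<in>S. \<phi> (fst q) x = 0 \<and> \<phi> (snd q) x = 0})
        = (\<Sum>x\<in>S. card {q\<in>PP. \<phi> (fst q) x = 0 \<and> \<phi> (snd q) x = 0})"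
      by (rule sum_card_swap[OF finPP finS])
    also have "\<dots> = (\<Sum>x\<in>S. if x \<in> {0} then card PP else A)" by (simp only: per2)
    also have "\<dots> = card PP * card (S \<inter> {0}) + A * card (S - {0})"
      by (rule sum_if_card[OF finS])
    finally have main: "card PP * (K+1) \<le> card PP * card (S \<inter> {0}) + A * card (S - {0})"
      using low2 by simp
    have z1: "card (S \<inter> {0}) \<le> 1" using card_mono[of "{0}" "S \<inter> {0}"] by simp
    have "card (S - {0}) \<le> card S" using finS by (simp add: card_mono)
    then have t: "card (S - {0}) < K*(p*p)" using sless pK by simp
    have a2: "A*(p*p) \<le> (p^d-1)*(p^d-p)" "0 < A" using arith2[OF p2 d3] by (simp_all add: A_def)
    show False using arith3[OF main z1 _ a2(2) t] a2(1) cardPP by simp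
  qed
qed


theorem mainTheorem8:
  fixes scale :: "'k::{field,finite} \<Rightarrow> 'v::ab_group_add \<Rightarrow> 'v"
    and p d :: nat and m :: int and S :: "'v set"
  assumes "prime p"
    and "CARD('k) = p"
    and "vector_space scale"
    and "vector_space.dim scale (UNIV :: 'v set) = d"
    and "d \<ge> 3"
    and "\<And>H. module.subspace scale H \<Longrightarrow> vector_space.dim scale H = d - 1 \<Longrightarrow>
           int (card (S \<inter> H)) \<ge> m * int p ^ (d - 2)"
  shows "int (card S) \<ge> m * int p ^ (d - 1)"
proof (cases "m \<le> 0")
  case True
  then have "m * int p ^ (d - 1) \<le> 0" by (simp add: mult_nonpos_nonneg)
  then show ?thesis by simp
next
  case False
  define n where "n = nat m"
  have mn: "m = int n" using False by (simp add: n_def)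
  have "n * CARD('k)^(d-1) \<le> card S"
  proof (rule main_nat[OF assms(3) assms(4) assms(5)])
    fix H assume "module.subspace scale H" "vector_space.dim scale H = d - 1"
    from assms(6)[OF this] have "int (n * p^(d-2)) \<le> int (card (S \<inter> H))" by (simp add: mn)
    then show "n * CARD('k)^(d-2) \<le> card (S \<inter> H)" unfolding assms(2) by (simp only: of_nat_le_iff)
  qed
  then have "int (n * p^(d-1)) \<le> int (card S)" unfolding assms(2) by (simp only: of_nat_le_iff)
  then show ?thesis by (simp add: mn)
qed

end
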